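(* Let $g \in L^1(0,1)$. Then $$\int_{0}^{1} \mathbf{E}(\sqrt{x})\, g(x)\,dx = \int_{0}^{1} \left[\frac{\pi}{2}-\left(\frac{\pi}{2}-1\right)\sqrt{x}\right]g(x)\,dx + \frac{1}{3}\iint_{(0,1)^2} \left(\mathbf{K}(\sqrt{x})-\frac{\pi}{2}\right) g\!\left(xz^{2/3}\right)\,dz\,dx.$$
   Context: $\mathbf{K}(k) = \int_0^{\pi/2} \frac{d\theta}{\sqrt{1-k^2\sin^2\theta}} = \frac{\pi}{2}{}_2F_1(\tfrac12,\tfrac12;1;k^2)$ and $\mathbf{E}(k) = \int_0^{\pi/2}\sqrt{1-k^2\sin^2\theta}\,d\theta = \frac{\pi}{2}{}_2F_1(\tfrac12,-\tfrac12;1;k^2)$ are the complete elliptic integrals of the first and second kinds. *)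

theory Defs
  imports "HOL-Analysis.Analysis"
begin

definition ellipticK :: "real \<Rightarrow> real" where
  "ellipticK k = integral {0..pi/2} (\<lambda>\<theta>. 1 / sqrt (1 - k^2 * (sin \<theta>)^2))"

definition ellipticE :: "real \<Rightarrow> real" where
  "ellipticE k = integral {0..pi/2} (\<lambda>\<theta>. sqrt (1 - k^2 * (sin \<theta>)^2))"

end

theory Submission
  imports Defs
begin



lemma Phi_deriv:
  fixes u q z :: real
  assumes u: "0 < u" and q: "0 \<le> q" "q < 1" and z: "u powr (3/2) \<le> z"
  shows "((\<lambda>z. 3 * (sqrt (z powr (2/3) - u * q) - z powr (1/3))) has_real_derivative
          (1 / z powr (2/3)) * (1 / sqrt (1 - (u / z powr (2/3)) * q) - 1)) (at z)"
proof -
  have zpos: "0 < z" using z u by (smt (verit) powr_gt_zero)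
  define w where "w = z powr (1/3)"
  have wpos: "w > 0" using zpos w_def by simp
  have w2: "z powr (2/3) = w^2" unfolding w_def
    by (simp add: power2_eq_square flip: powr_add)
  have zw: "z powr (-1/3) = 1/w" "z powr (-2/3) = 1/w^2" unfolding w_def using zpos
    by (simp_all add: power2_eq_square powr_minus_divide flip: powr_add)
  have "u = (u powr (3/2)) powr (2/3)" using u by (simp add: powr_powr)
  also have "\<dots> \<le> z powr (2/3)" using z u by (intro powr_mono2) auto
  finally have uz: "u \<le> w^2" using w2 by simp
  have "u * q < u * 1" using u q by (intro mult_strict_left_mono) auto
  then have pos: "0 < w^2 - u * q" using uz by linarith
  have "((\<lambda>z. 3 * (sqrt (z powr (2/3) - u * q) - z powr (1/3))) has_real_derivative
          3 * ((2/3) * z powr (2/3 - 1) / (2 * sqrt (z powr (2/3) - u * q)) - (1/3) * z powr (1/3 - 1))) (at z)"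
    using zpos pos w2
    by (auto intro!: derivative_eq_intros) (metis divide_inverse_commute)
  moreover have "3 * ((2/3) * z powr (2/3 - 1) / (2 * sqrt (z powr (2/3) - u * q)) - (1/3) * z powr (1/3 - 1))
      = (1 / z powr (2/3)) * (1 / sqrt (1 - (u / z powr (2/3)) * q) - 1)"
  proof -
    have e1: "1 - (u / w^2) * q = (w^2 - u*q) / w^2" using wpos by (simp add: field_simps)
    have e2: "sqrt (1 - (u / w^2) * q) = sqrt (w^2 - u*q) / w"
    proof -
      have "sqrt (1 - (u / w^2) * q) = sqrt (w^2 - u*q) / sqrt (w^2)"
        unfolding e1 by (rule real_sqrt_divide)
      then show ?thesis using wpos by simp
    qed
    have sp: "sqrt (w^2 - u*q) > 0" using pos by simp
    have p1: "z powr (2/3 - 1) = 1/w" "z powr (1/3 - 1) = 1/w^2" using zw by simp_all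
    show ?thesis unfolding p1 w2 e2 using wpos sp
      by (simp add: field_simps power2_eq_square)
  qed
  ultimately show ?thesis by simp
qed




lemma HK_to_L:
  fixes f :: "real \<Rightarrow> real"
  assumes "continuous_on {a..b} f"
  shows "integral {a..b} f = (\<integral>x. f x * indicator {a..b} x \<partial>lborel)"
  using set_borel_integral_eq_integral(2)[OF borel_integrable_atLeastAtMost'[OF assms]]
  unfolding set_lebesgue_integral_def by (simp add: mult.commute)

definition kk :: "real \<Rightarrow> real \<Rightarrow> real" where
  "kk y t = 1 / sqrt (1 - y * (sin t)^2) - 1"

definition psi :: "real \<Rightarrow> real \<Rightarrow> real" where
  "psi u t = sqrt (1 - u * (sin t)^2) - 1 - sqrt u * cos t + sqrt u"

lemma one_minus_pos: fixes y t :: real assumes "0 \<le> y" "y < 1" shows "0 < 1 - y * (sin t)^2"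
proof -
  have "(sin t)^2 + (cos t)^2 = 1" by simp
  moreover have "0 \<le> (cos t)^2" by simp
  ultimately have "(sin t)^2 \<le> 1" by linarith
  then have "y * (sin t)^2 \<le> y" using assms by (simp add: mult_left_le)
  then show ?thesis using assms by linarith
qed

lemma kk_nonneg: assumes "0 \<le> y" "y < 1" shows "0 \<le> kk y t"
proof -
  have p: "0 < 1 - y * (sin t)^2" by (rule one_minus_pos[OF assms])
  have "1 - y * (sin t)^2 \<le> 1" using assms by simp
  then have "sqrt (1 - y * (sin t)^2) \<le> 1" by simp
  then have "1 \<le> 1 / sqrt (1 - y * (sin t)^2)" using p by (simp add: field_simps)
  then show ?thesis unfolding kk_def by simp
qed

lemma kk_cont: assumes "0 \<le> y" "y < 1" shows "continuous_on A (kk y)"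
  unfolding kk_def using one_minus_pos[OF assms]
  by (auto intro!: continuous_intros simp: less_imp_neq[symmetric])

lemma K_leb:
  assumes "0 \<le> y" "y < 1"
  shows "ellipticK (sqrt y) - pi/2 = (\<integral>t. kk y t * indicator {0..pi/2} t \<partial>lborel)"
proof -
  have c1: "continuous_on {0..pi/2} (\<lambda>t. 1 / sqrt (1 - y * (sin t)^2))"
    using one_minus_pos[OF assms]
    by (auto intro!: continuous_intros simp: less_imp_neq[symmetric])
  have "ellipticK (sqrt y) = integral {0..pi/2} (\<lambda>t. 1 / sqrt (1 - y * (sin t)^2))"
    unfolding ellipticK_def using assms by simp
  moreover have "integral {0..pi/2} (kk y) = integral {0..pi/2} (\<lambda>t. 1 / sqrt (1 - y * (sin t)^2)) - integral {0..pi/2} (\<lambda>t. 1::real)"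
    unfolding kk_def
    by (rule integral_diff) (auto intro!: integrable_continuous_interval c1)
  moreover have "integral {0..pi/2} (\<lambda>t. 1::real) = pi/2" by simp
  moreover have "integral {0..pi/2} (kk y) = (\<integral>t. kk y t * indicator {0..pi/2} t \<partial>lborel)"
    by (rule HK_to_L[OF kk_cont[OF assms]])
  ultimately show ?thesis by simp
qed

lemma psi_cont: assumes "0 \<le> u" "u < 1" shows "continuous_on A (psi u)"
  unfolding psi_def using one_minus_pos[OF assms]
  by (auto intro!: continuous_intros)

lemma E_leb:
  assumes "0 \<le> u" "u < 1"
  shows "ellipticE (sqrt u) - (pi/2 - (pi/2 - 1) * sqrt u) = (\<integral>t. psi u t * indicator {0..pi/2} t \<partial>lborel)"
proof -
  have c1: "continuous_on {0..pi/2} (\<lambda>t. sqrt (1 - u * (sin t)^2))"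
    by (auto intro!: continuous_intros)
  have i1: "(\<lambda>t. sqrt (1 - u * (sin t)^2)) integrable_on {0..pi/2}"
    by (rule integrable_continuous_interval[OF c1])
  have i2: "(\<lambda>t. sqrt u * cos t) integrable_on {0..pi/2}"
    by (auto intro!: integrable_continuous_interval continuous_intros)
  have "ellipticE (sqrt u) = integral {0..pi/2} (\<lambda>t. sqrt (1 - u * (sin t)^2))"
    unfolding ellipticE_def using assms by simp
  moreover have "integral {0..pi/2} (psi u) = integral {0..pi/2} (\<lambda>t. sqrt (1 - u * (sin t)^2))
       - integral {0..pi/2} (\<lambda>t. 1::real) - integral {0..pi/2} (\<lambda>t. sqrt u * cos t) + integral {0..pi/2} (\<lambda>t. sqrt u)"
    unfolding psi_def
    by (subst integral_add integral_diff, (auto intro!: integrable_diff i1 i2 integrable_continuous_interval continuous_intros)[2])+ simp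
  moreover have "integral {0..pi/2} (\<lambda>t. 1::real) = pi/2" by simp
  moreover have "integral {0..pi/2} (\<lambda>t. sqrt u) = pi/2 * sqrt u" by simp
  moreover have "integral {0..pi/2} (\<lambda>t. sqrt u * cos t) = sqrt u"
    by (subst integral_mult_right) simp
  moreover have "integral {0..pi/2} (psi u) = (\<integral>t. psi u t * indicator {0..pi/2} t \<partial>lborel)"
    by (rule HK_to_L[OF psi_cont[OF assms]])
  ultimately show ?thesis by (simp add: algebra_simps)
qed




definition ktS :: "real \<Rightarrow> real" where
  "ktS y = indicator {0<..<1} y * (ellipticK (sqrt y) - pi/2)"

lemma ktS_alt: "ktS y = indicator {0<..<1} y * (\<integral>t. kk y t * indicator {0..pi/2} t \<partial>lborel)"
  unfolding ktS_def by (cases "y \<in> {0<..<1}") (auto simp: K_leb)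

lemma ktS_meas[measurable]: "ktS \<in> borel_measurable borel"
  unfolding ktS_alt[abs_def] kk_def by measurable

lemma psi_nonneg:
  assumes u: "0 \<le> u" "u \<le> 1" and t: "0 \<le> t" "t \<le> pi/2"
  shows "0 \<le> psi u t"
proof -
  define r where "r = sqrt u"
  define c where "c = cos t"
  have r: "0 \<le> r" "r \<le> 1" using u unfolding r_def by auto
  have c: "0 \<le> c" "c \<le> 1" unfolding c_def using t by (auto intro!: cos_ge_zero)
  have uu: "u = r^2" unfolding r_def using u by simp
  have ss: "(sin t)^2 = 1 - c^2" unfolding c_def by (simp add: sin_squared_eq)
  have arg: "1 - u * (sin t)^2 = 1 - r^2 + r^2 * c^2" unfolding ss uu by (simp add: algebra_simps)
  have "1 - r * (1 - c) \<le> sqrt (1 - u * (sin t)^2)"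
  proof (cases "1 - r * (1 - c) \<le> 0")
    case True
    have r2: "r^2 \<le> 1" using r by (simp add: power_le_one)
    have "0 \<le> r^2*c^2" by simp
    hence "0 \<le> 1 - u*(sin t)^2" unfolding arg using r2 by linarith
    then have "0 \<le> sqrt (1 - u * (sin t)^2)" by simp
    with True show ?thesis by linarith
  next
    case False
    have "(1 - r * (1 - c))^2 = (1 - r^2 + r^2 * c^2) - 2 * r * (1 - c) * (1 - r)"
      by (simp add: power2_eq_square algebra_simps)
    moreover have "0 \<le> 2 * r * (1 - c) * (1 - r)" using r c by simp
    ultimately have "(1 - r * (1 - c))^2 \<le> 1 - u * (sin t)^2" unfolding arg by linarith
    then show ?thesis by (rule real_le_rsqrt)
  qed
  then show ?thesis unfolding psi_def r_def[symmetric] c_def[symmetric] by (simp add: algebra_simps)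
qed




lemma powr_lt_iff_aux:
  fixes u z :: real
  assumes "0 < u" "0 < z"
  shows "u < z powr (2/3) \<longleftrightarrow> u powr (3/2) < z"
proof
  assume "u < z powr (2/3)"
  then have "u powr (3/2) < (z powr (2/3)) powr (3/2)" using assms by (intro powr_less_mono2) auto
  then show "u powr (3/2) < z" using assms by (simp add: powr_powr)
next
  assume "u powr (3/2) < z"
  then have "(u powr (3/2)) powr (2/3) < z powr (2/3)" using assms by (intro powr_less_mono2) auto
  then show "u < z powr (2/3)" using assms by (simp add: powr_powr)
qed

lemma kq_nonneg:
  fixes y q :: real
  assumes "0 \<le> y" "y \<le> 1" "0 \<le> q" "q < 1"
  shows "0 \<le> 1 / sqrt (1 - y * q) - 1"
proof -
  have "y * q \<le> 1 * q" using assms by (intro mult_right_mono) auto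
  then have p: "0 < 1 - y * q" using assms by simp
  have "1 - y * q \<le> 1" using assms by simp
  then have "sqrt (1 - y * q) \<le> 1" by simp
  then have "1 \<le> 1 / sqrt (1 - y * q)" using p by (simp add: field_simps)
  then show ?thesis by simp
qed

lemma W_val:
  assumes u: "0 < u" "u < 1"
  shows "(\<integral>\<^sup>+z. ennreal (indicator {0<..<1} z * (1 / z powr (2/3)) * ktS (u / z powr (2/3))) \<partial>lborel)
       = ennreal (3 * (ellipticE (sqrt u) - (pi/2 - (pi/2 - 1) * sqrt u)))"
proof -
  define a where "a = u powr (3/2)"
  have a0: "0 < a" using u a_def by simp
  have a1: "a < 1" unfolding a_def using u powr_less_mono2[of "3/2" u 1] by simp
  have a23: "a powr (2/3) = u" "a powr (1/3) = sqrt u" unfolding a_def using u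
    by (simp_all add: powr_powr powr_half_sqrt)
  define F where "F = (\<lambda>z t. ennreal (indicator {a<..<1} z * (1 / z powr (2/3) * kk (u / z powr (2/3)) t) * indicator {0..pi/2} t))"
  have F_meas: "(\<lambda>p. F (fst p) (snd p)) \<in> borel_measurable (lborel \<Otimes>\<^sub>M lborel)"
    unfolding F_def kk_def by measurable
  have step1: "ennreal (indicator {0<..<1} z * (1 / z powr (2/3)) * ktS (u / z powr (2/3))) = (\<integral>\<^sup>+t. F z t \<partial>lborel)" for z
  proof (cases "z \<in> {a<..<1}")
    case True
    then have z: "0 < z" "z < 1" "a < z" using a0 by auto
    define y where "y = u / z powr (2/3)"
    have y: "0 < y" "y < 1" using powr_lt_iff_aux[of u z] z u unfolding y_def a_def by auto
    have int: "integrable lborel (\<lambda>t. kk y t * indicator {0..pi/2} t)"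
      by (rule borel_integrable_atLeastAtMost) (use kk_cont[OF less_imp_le[OF y(1)] y(2), of UNIV] in \<open>auto simp: continuous_on_eq_continuous_at\<close>)
    have "indicator {0<..<1} z * (1 / z powr (2/3)) * ktS y = (1 / z powr (2/3)) * (\<integral>t. kk y t * indicator {0..pi/2} t \<partial>lborel)"
      using z y unfolding ktS_alt by simp
    also have "\<dots> = (\<integral>t. (1 / z powr (2/3)) * (kk y t * indicator {0..pi/2} t) \<partial>lborel)" by simp
    finally have "ennreal (indicator {0<..<1} z * (1 / z powr (2/3)) * ktS y) = (\<integral>\<^sup>+t. ennreal ((1 / z powr (2/3)) * (kk y t * indicator {0..pi/2} t)) \<partial>lborel)"
      by (subst nn_integral_eq_integral) (use int y in \<open>auto intro!: AE_I2 mult_nonneg_nonneg divide_nonneg_nonneg kk_nonneg\<close>)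
    then show ?thesis unfolding F_def y_def[symmetric] using True by (simp add: mult.assoc)
  next
    case False
    have "indicator {0<..<1} z * (1 / z powr (2/3)) * ktS (u / z powr (2/3)) = 0"
    proof (cases "0 < z \<and> z < 1")
      case True
      with False have "\<not> u / z powr (2/3) < 1" using powr_lt_iff_aux[of u z] u unfolding a_def by auto
      then show ?thesis unfolding ktS_def by simp
    qed simp
    then have "ennreal (indicator {0<..<1} z * (1 / z powr (2/3)) * ktS (u / z powr (2/3))) = 0" by (simp only: ennreal_0)
    moreover have "(\<integral>\<^sup>+t. F z t \<partial>lborel) = 0" using False by (simp add: F_def)
    ultimately show ?thesis by simp
  qed
  have step3: "(\<integral>\<^sup>+z. F z t \<partial>lborel) = ennreal (3 * psi u t * indicator {0..pi/2} t)" if tne: "t \<noteq> pi/2" for t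
  proof (cases "t \<in> {0..pi/2}")
    case True
    then have t: "0 \<le> t" "t < pi/2" using tne by auto
    define q where "q = (sin t)^2"
    have cpos: "0 < cos t" using t by (intro cos_gt_zero_pi) auto
    have q: "0 \<le> q" "q < 1" unfolding q_def using cpos by (auto simp: sin_squared_eq intro: power_le_one cos_le_one less_imp_le)
    define \<phi> where "\<phi> = (\<lambda>z::real. (1 / z powr (2/3)) * (1 / sqrt (1 - (u / z powr (2/3)) * q) - 1))"
    define \<Phi> where "\<Phi> = (\<lambda>z::real. 3 * (sqrt (z powr (2/3) - u * q) - z powr (1/3)))"
    have "(\<integral>\<^sup>+z. F z t \<partial>lborel) = (\<integral>\<^sup>+z. ennreal (\<phi> z) * indicator {a..1} z \<partial>lborel)"
    proof (rule nn_integral_cong_AE)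
      have "AE z in lborel. z \<noteq> a \<and> z \<noteq> 1" by (intro eventually_conj AE_lborel_singleton)
      then show "AE z in lborel. F z t = ennreal (\<phi> z) * indicator {a..1} z"
        by eventually_elim (use True in \<open>auto simp: F_def \<phi>_def kk_def q_def split: split_indicator\<close>)
    qed
    also have "\<dots> = \<Phi> 1 - \<Phi> a"
    proof (rule nn_integral_FTC_Icc)
      show "\<phi> \<in> borel_measurable borel" unfolding \<phi>_def by measurable
      show "a \<le> 1" using a1 by simp
      fix x assume x: "x \<in> {a..1}"
      show "(\<Phi> has_real_derivative \<phi> x) (at x)"
        unfolding \<Phi>_def \<phi>_def by (rule Phi_deriv) (use u q x a_def in auto)
      have xp: "0 < x" using x a0 by auto
      have "u \<le> x powr (2/3)"
        using powr_lt_iff_aux[of u x] u xp x a_def by (cases "x = a") (auto simp: a23 powr_powr)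
      then have "u / x powr (2/3) \<le> 1" using xp by simp
      then show "0 \<le> \<phi> x" unfolding \<phi>_def using xp u q
        by (intro mult_nonneg_nonneg kq_nonneg) auto
    qed
    also have "\<Phi> 1 - \<Phi> a = 3 * psi u t * indicator {0..pi/2} t"
    proof -
      have "u - u * q = (sqrt u * cos t)^2" unfolding q_def using u
        by (simp add: power_mult_distrib sin_squared_eq algebra_simps)
      then have "sqrt (u - u * q) = sqrt u * cos t" using cpos u by simp
      then show ?thesis unfolding \<Phi>_def psi_def q_def using True a23 by (simp add: algebra_simps)
    qed
    finally show ?thesis .
  next
    case False
    then show ?thesis unfolding F_def by simp
  qed
  have "(\<integral>\<^sup>+z. ennreal (indicator {0<..<1} z * (1 / z powr (2/3)) * ktS (u / z powr (2/3))) \<partial>lborel)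
       = (\<integral>\<^sup>+z. (\<integral>\<^sup>+t. F z t \<partial>lborel) \<partial>lborel)" by (intro nn_integral_cong step1)
  also have "\<dots> = (\<integral>\<^sup>+t. (\<integral>\<^sup>+z. F z t \<partial>lborel) \<partial>lborel)"
    using lborel_pair.Fubini[OF F_meas] by simp
  also have "\<dots> = (\<integral>\<^sup>+t. ennreal (3 * psi u t * indicator {0..pi/2} t) \<partial>lborel)"
    by (rule nn_integral_cong_AE) (use AE_lborel_singleton[of "pi/2"] in \<open>eventually_elim, use step3 in auto\<close>)
  also have "\<dots> = ennreal (\<integral>t. 3 * psi u t * indicator {0..pi/2} t \<partial>lborel)"
  proof (rule nn_integral_eq_integral)
    show "integrable lborel (\<lambda>t. 3 * psi u t * indicator {0..pi/2} t)"
      unfolding mult.assoc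
      by (intro integrable_mult_right borel_integrable_atLeastAtMost)
         (use psi_cont[of u UNIV] u in \<open>auto simp: continuous_on_eq_continuous_at\<close>)
    show "AE t in lborel. 0 \<le> 3 * psi u t * indicator {0..pi/2} t"
      using u by (auto intro!: psi_nonneg split: split_indicator)
  qed
  also have "(\<integral>t. 3 * psi u t * indicator {0..pi/2} t \<partial>lborel) = 3 * (ellipticE (sqrt u) - (pi/2 - (pi/2 - 1) * sqrt u))"
    using E_leb[of u] u by (simp add: mult.assoc)
  finally show ?thesis .
qed




lemma ktS_nonneg: "0 \<le> ktS y"
proof (cases "y \<in> {0<..<1}")
  case True
  then have "0 \<le> (\<integral>t. kk y t * indicator {0..pi/2} t \<partial>lborel)"
    by (intro Bochner_Integration.integral_nonneg) (auto intro!: mult_nonneg_nonneg kk_nonneg)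
  then show ?thesis using True unfolding ktS_alt by simp
qed (simp add: ktS_def)

definition FF :: "real \<Rightarrow> real" where
  "FF t = ellipticE (sqrt t) - (pi/2 - (pi/2 - 1) * sqrt t)"

lemma core:
  fixes h :: "real \<Rightarrow> real"
  assumes h_meas[measurable]: "h \<in> borel_measurable borel" and h_nn: "\<And>t. 0 \<le> h t"
    and h_out: "\<And>t. t \<notin> {0<..<1} \<Longrightarrow> h t = 0"
  shows "(\<integral>\<^sup>+p. ennreal (indicator ({0<..<1} \<times> {0<..<1}) p * ((ellipticK (sqrt (fst p)) - pi/2) * h (fst p * (snd p) powr (2/3)))) \<partial>(lborel \<Otimes>\<^sub>M lborel))
       = (\<integral>\<^sup>+t. ennreal (3 * FF t * h t) \<partial>lborel)"
proof -
  define f where "f = (\<lambda>p::real\<times>real. ennreal (indicator {0<..<1} (snd p) * ktS (fst p) * h (fst p * (snd p) powr (2/3))))"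
  have f_meas: "f \<in> borel_measurable (lborel \<Otimes>\<^sub>M lborel)" unfolding f_def by measurable
  define G where "G = (\<lambda>z t. ennreal (indicator {0<..<1} z * (1 / z powr (2/3)) * ktS (t / z powr (2/3)) * h t))"
  have G_meas: "(\<lambda>p. G (fst p) (snd p)) \<in> borel_measurable (lborel \<Otimes>\<^sub>M lborel)" unfolding G_def by measurable
  have "(\<integral>\<^sup>+p. ennreal (indicator ({0<..<1} \<times> {0<..<1}) p * ((ellipticK (sqrt (fst p)) - pi/2) * h (fst p * (snd p) powr (2/3)))) \<partial>(lborel \<Otimes>\<^sub>M lborel))
      = integral\<^sup>N (lborel \<Otimes>\<^sub>M lborel) f"
    by (intro nn_integral_cong) (auto simp: f_def ktS_def indicator_def)
  also have "\<dots> = (\<integral>\<^sup>+z. (\<integral>\<^sup>+x. f (x, z) \<partial>lborel) \<partial>lborel)"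
    by (rule lborel_pair.nn_integral_snd[OF f_meas, symmetric])
  also have "\<dots> = (\<integral>\<^sup>+z. (\<integral>\<^sup>+t. G z t \<partial>lborel) \<partial>lborel)"
  proof (rule nn_integral_cong)
    fix z :: real
    show "(\<integral>\<^sup>+x. f (x, z) \<partial>lborel) = (\<integral>\<^sup>+t. G z t \<partial>lborel)"
    proof (cases "z \<in> {0<..<1}")
      case True
      define c where "c = z powr (2/3)"
      have c: "0 < c" using True c_def by auto
      have "(\<integral>\<^sup>+x. f (x, z) \<partial>lborel) = (\<integral>\<^sup>+x. ennreal (ktS x * h (x * c)) \<partial>lborel)"
        using True by (simp add: f_def c_def)
      also have "\<dots> = \<bar>1/c\<bar> * (\<integral>\<^sup>+x. ennreal (ktS (0 + (1/c) * x) * h ((0 + (1/c) * x) * c)) \<partial>lborel)"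
        by (rule nn_integral_real_affine) (use c in auto)
      also have "\<dots> = (\<integral>\<^sup>+x. ennreal (1/c) * ennreal (ktS (x / c) * h x) \<partial>lborel)"
        using c by (subst nn_integral_cmult) auto
      also have "\<dots> = (\<integral>\<^sup>+t. G z t \<partial>lborel)"
        using True c by (intro nn_integral_cong) (simp add: G_def c_def ennreal_mult'[symmetric] mult.assoc)
      finally show ?thesis .
    next
      case False
      then show ?thesis by (simp add: f_def G_def)
    qed
  qed
  also have "\<dots> = (\<integral>\<^sup>+t. (\<integral>\<^sup>+z. G z t \<partial>lborel) \<partial>lborel)"
    using lborel_pair.Fubini[OF G_meas] by simp
  also have "\<dots> = (\<integral>\<^sup>+t. ennreal (3 * FF t * h t) \<partial>lborel)"
  proof (rule nn_integral_cong)
    fix t :: real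
    show "(\<integral>\<^sup>+z. G z t \<partial>lborel) = ennreal (3 * FF t * h t)"
    proof (cases "t \<in> {0<..<1}")
      case True
      have "(\<integral>\<^sup>+z. G z t \<partial>lborel) = (\<integral>\<^sup>+z. ennreal (indicator {0<..<1} z * (1 / z powr (2/3)) * ktS (t / z powr (2/3))) * ennreal (h t) \<partial>lborel)"
        by (intro nn_integral_cong) (simp only: G_def ennreal_mult''[OF h_nn])
      also have "\<dots> = ennreal (3 * FF t) * ennreal (h t)"
        by (subst nn_integral_multc) (use W_val[of t] True in \<open>auto simp: FF_def\<close>)
      also have "\<dots> = ennreal (3 * FF t * h t)" by (simp add: ennreal_mult'' h_nn)
      finally show ?thesis .
    next
      case False
      then show ?thesis by (simp add: G_def h_out)
    qed
  qed
  finally show ?thesis .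
qed




lemma E_le: assumes "0 \<le> t" shows "ellipticE (sqrt t) \<le> pi/2"
proof -
  have c1: "continuous_on {0..pi/2} (\<lambda>\<theta>. sqrt (1 - (sqrt t)^2 * (sin \<theta>)^2))"
    by (auto intro!: continuous_intros)
  have "ellipticE (sqrt t) \<le> integral {0..pi/2} (\<lambda>\<theta>. 1::real)"
    unfolding ellipticE_def
  proof (rule integral_le)
    show "(\<lambda>\<theta>. sqrt (1 - (sqrt t)^2 * (sin \<theta>)^2)) integrable_on {0..pi/2}"
      by (rule integrable_continuous_interval[OF c1])
    show "(\<lambda>\<theta>. 1::real) integrable_on {0..pi/2}" by (intro integrable_continuous_interval continuous_intros)
    fix x show "sqrt (1 - (sqrt t)^2 * (sin x)^2) \<le> 1" using assms by simp
  qed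
  then show ?thesis by simp
qed

definition FFS :: "real \<Rightarrow> real" where
  "FFS t = indicator {0<..<1} t * FF t"

lemma FFS_alt: "FFS t = indicator {0<..<1} t * (\<integral>\<theta>. psi t \<theta> * indicator {0..pi/2} \<theta> \<partial>lborel)"
  unfolding FFS_def FF_def by (cases "t \<in> {0<..<1}") (auto simp: E_leb)

lemma FFS_meas[measurable]: "FFS \<in> borel_measurable borel"
  unfolding FFS_alt[abs_def] psi_def by measurable

lemma FFS_nonneg: "0 \<le> FFS t"
proof (cases "t \<in> {0<..<1}")
  case True
  then have "0 \<le> (\<integral>\<theta>. psi t \<theta> * indicator {0..pi/2} \<theta> \<partial>lborel)"
    by (intro Bochner_Integration.integral_nonneg) (auto intro!: mult_nonneg_nonneg psi_nonneg simp: indicator_def)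
  then show ?thesis using True unfolding FFS_alt by simp
qed (simp add: FFS_def)

lemma FFS_le: "FFS t \<le> 1"
proof (cases "t \<in> {0<..<1}")
  case True
  then have "ellipticE (sqrt t) \<le> pi/2" by (intro E_le) auto
  moreover have "sqrt t \<le> 1" using True by auto
  moreover have "0 \<le> pi/2 - 1" using pi_gt3 by simp
  ultimately have "(pi/2 - 1) * sqrt t \<le> (pi/2 - 1) * 1" by (intro mult_left_mono)
  then have "FF t \<le> (pi/2 - 1) * 1" unfolding FF_def using \<open>ellipticE (sqrt t) \<le> pi/2\<close> by linarith
  then show ?thesis using True pi_less_4 unfolding FFS_def by simp
qed (simp add: FFS_def)

definition PP :: "(real \<Rightarrow> real) \<Rightarrow> real \<times> real \<Rightarrow> real" where
  "PP h p = indicator ({0<..<1} \<times> {0<..<1}) p * ((ellipticK (sqrt (fst p)) - pi/2) * h (fst p * (snd p) powr (2/3)))"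

lemma per_h:
  fixes h :: "real \<Rightarrow> real"
  assumes h_meas[measurable]: "h \<in> borel_measurable borel" and h_nn: "\<And>t. 0 \<le> h t"
    and h_out: "\<And>t. t \<notin> {0<..<1} \<Longrightarrow> h t = 0" and h_int: "integrable lborel h"
  shows "integrable (lborel \<Otimes>\<^sub>M lborel) (PP h)" "integrable lborel (\<lambda>t. FFS t * h t)"
    "(\<integral>p. PP h p \<partial>(lborel \<Otimes>\<^sub>M lborel)) = 3 * (\<integral>t. FFS t * h t \<partial>lborel)"
proof -
  have PP_alt: "PP h = (\<lambda>p. indicator {0<..<1} (snd p) * ktS (fst p) * h (fst p * (snd p) powr (2/3)))"
    by (auto simp: PP_def ktS_def indicator_def fun_eq_iff)
  have PP_meas: "PP h \<in> borel_measurable (lborel \<Otimes>\<^sub>M lborel)" unfolding PP_alt by measurable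
  have PP_nn: "0 \<le> PP h p" for p unfolding PP_alt by (auto intro!: mult_nonneg_nonneg ktS_nonneg h_nn)
  show int2: "integrable lborel (\<lambda>t. FFS t * h t)"
  proof (rule Bochner_Integration.integrable_bound[OF h_int])
    show "(\<lambda>t. FFS t * h t) \<in> borel_measurable lborel" by measurable
    show "AE x in lborel. norm (FFS x * h x) \<le> norm (h x)"
      using FFS_nonneg FFS_le h_nn by (auto intro!: AE_I2 mult_left_le_one_le)
  qed
  have "(\<integral>\<^sup>+p. ennreal (PP h p) \<partial>(lborel \<Otimes>\<^sub>M lborel)) = (\<integral>\<^sup>+t. ennreal (3 * FF t * h t) \<partial>lborel)"
    unfolding PP_def by (rule core[OF h_meas h_nn h_out])
  also have "\<dots> = (\<integral>\<^sup>+t. ennreal (3 * FFS t * h t) \<partial>lborel)"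
    by (intro nn_integral_cong) (auto simp: FFS_def h_out indicator_def)
  also have "\<dots> = ennreal (\<integral>t. 3 * FFS t * h t \<partial>lborel)"
    by (rule nn_integral_eq_integral)
       (use int2 FFS_nonneg h_nn in \<open>auto simp: mult.assoc intro!: AE_I2\<close>)
  finally have eq: "(\<integral>\<^sup>+p. ennreal (PP h p) \<partial>(lborel \<Otimes>\<^sub>M lborel)) = ennreal (\<integral>t. 3 * FFS t * h t \<partial>lborel)" .
  show int1: "integrable (lborel \<Otimes>\<^sub>M lborel) (PP h)"
    by (rule integrableI_nonneg) (use PP_meas PP_nn eq in auto)
  have "ennreal (\<integral>p. PP h p \<partial>(lborel \<Otimes>\<^sub>M lborel)) = ennreal (\<integral>t. 3 * FFS t * h t \<partial>lborel)"
    using nn_integral_eq_integral[OF int1] PP_nn eq by simp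
  then have "(\<integral>p. PP h p \<partial>(lborel \<Otimes>\<^sub>M lborel)) = (\<integral>t. 3 * FFS t * h t \<partial>lborel)"
    by (subst (asm) ennreal_inj)
       (auto intro!: Bochner_Integration.integral_nonneg PP_nn mult_nonneg_nonneg FFS_nonneg h_nn)
  then show "(\<integral>p. PP h p \<partial>(lborel \<Otimes>\<^sub>M lborel)) = 3 * (\<integral>t. FFS t * h t \<partial>lborel)"
    by (simp add: mult.assoc)
qed




lemma poly_bound:
  fixes s :: real assumes "0 \<le> s" "s \<le> 1" shows "\<bar>pi/2 - (pi/2 - 1) * s\<bar> \<le> 2"
proof -
  have y0: "0 \<le> (pi/2 - 1) * s" using assms pi_gt3 by simp
  have y1: "(pi/2 - 1) * s \<le> (pi/2 - 1) * 1" using assms pi_gt3 by (intro mult_left_mono) auto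
  then have y2: "(pi/2 - 1) * s \<le> pi/2 - 1" by (simp only: mult_1_right)
  have a1: "pi/2 - (pi/2 - 1) * s \<le> 2" using y0 pi_less_4 by linarith
  have a2: "(pi/2 - 1) * s - pi/2 \<le> 2" using y2 by linarith
  show ?thesis using a1 a2 by (simp only: abs_le_iff minus_diff_eq)
qed

theorem mainTheorem11:
  fixes g :: "real \<Rightarrow> real"
  assumes "set_integrable lborel {0<..<1} g"
  shows "(LINT x:{0<..<1}|lborel. ellipticE (sqrt x) * g x)
       = (LINT x:{0<..<1}|lborel. (pi/2 - (pi/2 - 1) * sqrt x) * g x)
         + (1/3) * (LINT p:({0<..<1} \<times> {0<..<1})|(lborel \<Otimes>\<^sub>M lborel).
              (ellipticK (sqrt (fst p)) - pi/2) * g (fst p * (snd p) powr (2/3)))"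
proof -
  define G where "G = (\<lambda>t. indicator {0<..<1} t * g t)"
  have intG: "integrable lborel G" using assms unfolding set_integrable_def G_def by simp
  have G_meas[measurable]: "G \<in> borel_measurable borel"
    using borel_measurable_integrable[OF intG] by simp
  define h1 where "h1 = (\<lambda>t. max (G t) 0)"
  define h2 where "h2 = (\<lambda>t. max (- G t) 0)"
  have h1m[measurable]: "h1 \<in> borel_measurable borel" unfolding h1_def by measurable
  have h2m[measurable]: "h2 \<in> borel_measurable borel" unfolding h2_def by measurable
  have h1i: "integrable lborel h1" unfolding h1_def using intG by auto
  have h2i: "integrable lborel h2" unfolding h2_def using intG by auto
  have h1o: "h1 t = 0" if "t \<notin> {0<..<1}" for t using that by (simp add: h1_def G_def)
  have h2o: "h2 t = 0" if "t \<notin> {0<..<1}" for t using that by (simp add: h2_def G_def)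
  have Gh: "G t = h1 t - h2 t" for t by (simp add: h1_def h2_def)
  have h1n: "\<And>t. 0 \<le> h1 t" by (simp add: h1_def)
  have h2n: "\<And>t. 0 \<le> h2 t" by (simp add: h2_def)
  note P1 = per_h[OF h1m h1n h1o h1i]
  note P2 = per_h[OF h2m h2n h2o h2i]
  have intFG: "integrable lborel (\<lambda>t. FFS t * G t)"
  proof -
    have "integrable lborel (\<lambda>t. FFS t * h1 t - FFS t * h2 t)" using P1(2) P2(2) by auto
    then show ?thesis by (simp add: Gh algebra_simps)
  qed
  have "(LINT p:({0<..<1} \<times> {0<..<1})|(lborel \<Otimes>\<^sub>M lborel).
              (ellipticK (sqrt (fst p)) - pi/2) * g (fst p * (snd p) powr (2/3)))
        = (\<integral>p. PP h1 p - PP h2 p \<partial>(lborel \<Otimes>\<^sub>M lborel))"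
    unfolding set_lebesgue_integral_def
  proof (intro Bochner_Integration.integral_cong refl)
    fix p :: "real \<times> real"
    show "indicator ({0<..<1} \<times> {0<..<1}) p *\<^sub>R ((ellipticK (sqrt (fst p)) - pi/2) * g (fst p * (snd p) powr (2/3)))
        = PP h1 p - PP h2 p"
    proof (cases "p \<in> {0<..<1} \<times> {0<..<1}")
      case True
      obtain x z where p: "p = (x, z)" by fastforce
      with True have xz: "0 < x" "x < 1" "0 < z" "z < 1" by auto
      have "z powr (2/3) < 1" using xz powr_less_mono2[of "2/3" z 1] by simp
      then have "x * z powr (2/3) < 1 * 1" using xz by (intro mult_strict_mono) auto
      moreover have "0 < x * z powr (2/3)" using xz by simp
      ultimately have "G (x * z powr (2/3)) = g (x * z powr (2/3))" by (simp add: G_def)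
      then have gh: "g (x * z powr (2/3)) = h1 (x * z powr (2/3)) - h2 (x * z powr (2/3))" by (simp add: Gh)
      show ?thesis using True unfolding PP_def p
        by (simp add: gh algebra_simps)
    next
      case False
      then show ?thesis by (simp add: PP_def)
    qed
  qed
  also have "\<dots> = 3 * (\<integral>t. FFS t * G t \<partial>lborel)"
    using P1 P2 by (simp add: Gh algebra_simps)
  finally have pair: "(1/3) * (LINT p:({0<..<1} \<times> {0<..<1})|(lborel \<Otimes>\<^sub>M lborel).
              (ellipticK (sqrt (fst p)) - pi/2) * g (fst p * (snd p) powr (2/3)))
        = (\<integral>t. FFS t * G t \<partial>lborel)" by simp
  have intpoly: "integrable lborel (\<lambda>t. (pi/2 - (pi/2 - 1) * sqrt t) * G t)"
  proof -
    have "integrable lborel (\<lambda>t. indicator {0<..<1} t * (pi/2 - (pi/2 - 1) * sqrt t) * G t)"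
    proof (rule Bochner_Integration.integrable_bound[OF integrable_mult_right[OF intG, of 2]])
      show "(\<lambda>t. indicator {0<..<1} t * (pi/2 - (pi/2 - 1) * sqrt t) * G t) \<in> borel_measurable lborel"
        by measurable
      show "AE x in lborel. norm (indicator {0<..<1} x * (pi/2 - (pi/2 - 1) * sqrt x) * G x) \<le> norm (2 * G x)"
      proof (rule AE_I2)
        fix x :: real
        show "norm (indicator {0<..<1} x * (pi/2 - (pi/2 - 1) * sqrt x) * G x) \<le> norm (2 * G x)"
        proof (cases "x \<in> {0<..<1}")
          case True
          have s: "0 \<le> sqrt x" "sqrt x \<le> 1" using True by auto
          have "\<bar>pi/2 - (pi/2 - 1) * sqrt x\<bar> \<le> 2" using poly_bound[OF s] .
          then show ?thesis using True by (simp add: abs_mult mult_right_mono)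
        qed (simp add: G_def)
      qed
    qed
    moreover have "(\<lambda>t. indicator {0<..<1} t * (pi/2 - (pi/2 - 1) * sqrt t) * G t) = (\<lambda>t. (pi/2 - (pi/2 - 1) * sqrt t) * G t)"
      by (auto simp: fun_eq_iff G_def indicator_def)
    ultimately show ?thesis by simp
  qed
  have "(LINT x:{0<..<1}|lborel. ellipticE (sqrt x) * g x)
      = (\<integral>t. FFS t * G t + (pi/2 - (pi/2 - 1) * sqrt t) * G t \<partial>lborel)"
    unfolding set_lebesgue_integral_def
    by (intro Bochner_Integration.integral_cong refl) (auto simp: FFS_def FF_def G_def indicator_def algebra_simps)
  also have "\<dots> = (\<integral>t. FFS t * G t \<partial>lborel) + (\<integral>t. (pi/2 - (pi/2 - 1) * sqrt t) * G t \<partial>lborel)"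
    using intFG intpoly by simp
  also have "(\<integral>t. (pi/2 - (pi/2 - 1) * sqrt t) * G t \<partial>lborel) = (LINT x:{0<..<1}|lborel. (pi/2 - (pi/2 - 1) * sqrt x) * g x)"
    unfolding set_lebesgue_integral_def
    by (intro Bochner_Integration.integral_cong refl) (auto simp: G_def indicator_def)
  finally show ?thesis using pair by simp
qed


end
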